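(* Let $\mathfrak{n}$ be the real $7$-dimensional Lie algebra with basis $e_1,\dots,e_7$ whose nonzero brackets (up to antisymmetry) are $[e_1,e_2]=e_4$, $[e_1,e_3]=e_5$, $[e_1,e_4]=e_6$, $[e_1,e_6]=e_7$, $[e_2,e_3]=e_6$, $[e_2,e_5]=e_7$, $[e_3,e_5]=e_7$. Then $\mathfrak{n}$ is not an Einstein nilradical.
   Context: A real nilpotent Lie algebra $\mathfrak{n}$ is called an Einstein nilradical if it admits an inner product such that the left-invariant Riemannian metric it defines on the simply connected nilpotent Lie group with Lie algebra $\mathfrak{n}$ is a nilsoliton, i.e. its Ricci operator satisfies $\mathrm{Ric}=c\,\mathrm{Id}+D$ for some $c\in\mathbb{R}$ and some derivation $D$ of $\mathfrak{n}$. Brackets of basis elements not listed are zero. *)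

theory Defs
  imports "HOL-Analysis.Analysis"
begin

datatype idx = E1 | E2 | E3 | E4 | E5 | E6 | E7

lemma UNIV_idx: "(UNIV :: idx set) = {E1, E2, E3, E4, E5, E6, E7}"
  by (auto intro: idx.exhaust)

instance idx :: finite
  by standard (simp add: UNIV_idx)

type_synonym vec7 = "real ^ idx"

definition e :: "idx \<Rightarrow> vec7" where
  "e i = axis i 1"

fun nbr :: "idx \<Rightarrow> idx \<Rightarrow> vec7" where
  "nbr E1 E2 = e E4" | "nbr E2 E1 = - e E4"
| "nbr E1 E3 = e E5" | "nbr E3 E1 = - e E5"
| "nbr E1 E4 = e E6" | "nbr E4 E1 = - e E6"
| "nbr E1 E6 = e E7" | "nbr E6 E1 = - e E7"
| "nbr E2 E3 = e E6" | "nbr E3 E2 = - e E6"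
| "nbr E2 E5 = e E7" | "nbr E5 E2 = - e E7"
| "nbr E3 E5 = e E7" | "nbr E5 E3 = - e E7"
| "nbr _ _ = 0"

definition n_bracket :: "vec7 \<Rightarrow> vec7 \<Rightarrow> vec7" where
  "n_bracket x y = (\<Sum>i\<in>UNIV. \<Sum>j\<in>UNIV. (x $ i * y $ j) *\<^sub>R nbr i j)"

definition is_inner_product :: "(real ^ 'n \<Rightarrow> real ^ 'n \<Rightarrow> real) \<Rightarrow> bool" where
  "is_inner_product ip \<longleftrightarrow>
     (\<forall>x y. ip x y = ip y x) \<and> (\<forall>y. linear (\<lambda>x. ip x y)) \<and> (\<forall>x. x \<noteq> 0 \<longrightarrow> ip x x > 0)"

definition orthonormal_basis ::
  "(real ^ 'n \<Rightarrow> real ^ 'n \<Rightarrow> real) \<Rightarrow> ('n \<Rightarrow> real ^ 'n) \<Rightarrow> bool" where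
  "orthonormal_basis ip b \<longleftrightarrow> (\<forall>i j. ip (b i) (b j) = (if i = j then 1 else 0))"

text \<open>Ricci form of the left-invariant metric of a nilpotent metric Lie algebra, computed
  in an orthonormal basis b (standard formula, e.g. Lauret):
  <Ric X, Y> = -1/2 sum_ij <[X,b_i],b_j><[Y,b_i],b_j> + 1/4 sum_ij <[b_i,b_j],X><[b_i,b_j],Y>.\<close>
definition ricci_form ::
  "(real ^ 'n \<Rightarrow> real ^ 'n \<Rightarrow> real ^ 'n) \<Rightarrow> (real ^ 'n \<Rightarrow> real ^ 'n \<Rightarrow> real)
    \<Rightarrow> ('n::finite \<Rightarrow> real ^ 'n) \<Rightarrow> real ^ 'n \<Rightarrow> real ^ 'n \<Rightarrow> real" where
  "ricci_form br ip b X Y =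
     - (1/2) * (\<Sum>i\<in>UNIV. \<Sum>j\<in>UNIV. ip (br X (b i)) (b j) * ip (br Y (b i)) (b j))
     + (1/4) * (\<Sum>i\<in>UNIV. \<Sum>j\<in>UNIV. ip (br (b i) (b j)) X * ip (br (b i) (b j)) Y)"

definition ricci_op ::
  "(real ^ 'n \<Rightarrow> real ^ 'n \<Rightarrow> real ^ 'n) \<Rightarrow> (real ^ 'n \<Rightarrow> real ^ 'n \<Rightarrow> real)
    \<Rightarrow> ('n::finite \<Rightarrow> real ^ 'n) \<Rightarrow> real ^ 'n \<Rightarrow> real ^ 'n" where
  "ricci_op br ip b X = (\<Sum>k\<in>UNIV. ricci_form br ip b X (b k) *\<^sub>R b k)"

definition is_derivation ::
  "(real ^ 'n \<Rightarrow> real ^ 'n \<Rightarrow> real ^ 'n) \<Rightarrow> (real ^ 'n \<Rightarrow> real ^ 'n) \<Rightarrow> bool" where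
  "is_derivation br D \<longleftrightarrow> linear D \<and> (\<forall>x y. D (br x y) = br (D x) y + br x (D y))"

definition is_nilsoliton ::
  "(real ^ 'n \<Rightarrow> real ^ 'n \<Rightarrow> real ^ 'n) \<Rightarrow> (real ^ 'n \<Rightarrow> real ^ 'n \<Rightarrow> real) \<Rightarrow> bool" where
  "is_nilsoliton br ip \<longleftrightarrow>
     (\<exists>b::'n::finite \<Rightarrow> real ^ 'n. orthonormal_basis ip b \<and>
        (\<exists>c D. is_derivation br D \<and> ricci_op br ip b = (\<lambda>X. c *\<^sub>R X + D X)))"

definition einstein_nilradical :: "(real ^ 'n::finite \<Rightarrow> real ^ 'n \<Rightarrow> real ^ 'n) \<Rightarrow> bool" where
  "einstein_nilradical br \<longleftrightarrow> (\<exists>ip. is_inner_product ip \<and> is_nilsoliton br ip)"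

end

theory Submission
  imports Defs
begin


lemma all_idx: "(\<forall>i::idx. P i) \<longleftrightarrow> P E1 \<and> P E2 \<and> P E3 \<and> P E4 \<and> P E5 \<and> P E6 \<and> P E7"
  by (metis idx.exhaust)

lemma sum_idx: "(\<Sum>i\<in>(UNIV::idx set). f i) = f E1 + f E2 + f E3 + f E4 + f E5 + f E6 + f E7"
  by (simp add: UNIV_idx add.assoc)

lemma card_idx: "CARD(idx) = 7" by (simp add: UNIV_idx)

lemma e_nth[simp]: "e i $ j = (if j = i then 1 else 0)"
  by (simp add: e_def axis_def)

lemma br_nth[simp]:
  "n_bracket x y $ E1 = 0" "n_bracket x y $ E2 = 0" "n_bracket x y $ E3 = 0"
  "n_bracket x y $ E4 = x$E1*y$E2 - x$E2*y$E1"
  "n_bracket x y $ E5 = x$E1*y$E3 - x$E3*y$E1"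
  "n_bracket x y $ E6 = x$E1*y$E4 - x$E4*y$E1 + x$E2*y$E3 - x$E3*y$E2"
  "n_bracket x y $ E7 = x$E1*y$E6 - x$E6*y$E1 + x$E2*y$E5 - x$E5*y$E2 + x$E3*y$E5 - x$E5*y$E3"
  by (simp_all add: n_bracket_def sum_idx algebra_simps)

lemma br_bilinear: "bilinear n_bracket"
  unfolding bilinear_def
  by (auto intro!: linearI simp: vec_eq_iff all_idx algebra_simps)

lemma br_antisym: "n_bracket y x = - n_bracket x y"
  by (simp add: vec_eq_iff all_idx algebra_simps)

lemma br_self: "n_bracket x x = 0"
  by (simp add: vec_eq_iff all_idx algebra_simps)

locale IP =
  fixes ip :: "vec7 \<Rightarrow> vec7 \<Rightarrow> real"
  assumes ipI: "is_inner_product ip"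
begin

lemma ip_sym: "ip x y = ip y x"
  using ipI by (simp add: is_inner_product_def)

lemma ip_pos: "x \<noteq> 0 \<Longrightarrow> ip x x > 0"
  using ipI by (simp add: is_inner_product_def)

lemma ip_bil: "bilinear ip"
proof -
  have l: "\<And>y. linear (\<lambda>x. ip x y)" using ipI unfolding is_inner_product_def by blast
  have "linear (\<lambda>y. ip x y)" for x
  proof -
    have "(\<lambda>y. ip x y) = (\<lambda>y. ip y x)" using ip_sym by auto
    thus ?thesis using l by simp
  qed
  thus ?thesis using l unfolding bilinear_def by auto
qed

lemma ip_simps[simp]:
  "ip (x + y) z = ip x z + ip y z" "ip x (y + z) = ip x y + ip x z"
  "ip (x - y) z = ip x z - ip y z" "ip x (y - z) = ip x y - ip x z"
  "ip (a *\<^sub>R x) z = a * ip x z" "ip x (a *\<^sub>R z) = a * ip x z"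
  "ip (- x) z = - ip x z" "ip x (- z) = - ip x z"
  "ip 0 z = 0" "ip x 0 = 0"
  using ip_bil
  by (simp_all add: bilinear_ladd bilinear_radd bilinear_lsub bilinear_rsub bilinear_lmul
      bilinear_rmul bilinear_lneg bilinear_rneg bilinear_lzero bilinear_rzero)

lemma ip_sum[simp]:
  "ip (sum f S) z = (\<Sum>i\<in>S. ip (f i) z)" "ip z (sum f S) = (\<Sum>i\<in>S. ip z (f i))"
proof -
  have l1: "linear (\<lambda>x. ip x z)" and l2: "linear (\<lambda>x. ip z x)"
    using ip_bil by (auto simp: bilinear_def)
  show "ip (sum f S) z = (\<Sum>i\<in>S. ip (f i) z)" using linear_sum[OF l1] by simp
  show "ip z (sum f S) = (\<Sum>i\<in>S. ip z (f i))" using linear_sum[OF l2] by simp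
qed

lemma ip_self_zero: "ip x x = 0 \<longleftrightarrow> x = 0"
  using ip_pos by force

lemma orth_card:
  fixes g :: "'a::finite \<Rightarrow> vec7"
  assumes o: "\<And>p q. p \<noteq> q \<Longrightarrow> ip (g p) (g q) = 0" and nz: "\<And>p. g p \<noteq> 0"
  shows "CARD('a) \<le> 7"
proof -
  have inj: "inj g"
  proof (rule injI)
    fix p q assume "g p = g q"
    show "p = q"
    proof (rule ccontr)
      assume "p \<noteq> q"
      hence "ip (g p) (g p) = 0" using o \<open>g p = g q\<close> by metis
      thus False using nz ip_self_zero by blast
    qed
  qed
  have ind: "independent (range g)"
    unfolding independent_explicit
  proof (intro conjI allI impI ballI)
    show "finite (range g)" by simp
    fix c v assume s: "(\<Sum>v\<in>range g. c v *\<^sub>R v) = 0" and v: "v \<in> range g"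
    obtain q where q: "v = g q" using v by auto
    have "(\<Sum>p\<in>UNIV. c (g p) *\<^sub>R g p) = 0"
      using s by (simp add: sum.reindex[OF inj])
    hence "ip (\<Sum>p\<in>UNIV. c (g p) *\<^sub>R g p) (g q) = 0" by simp
    hence "(\<Sum>p\<in>UNIV. c (g p) * ip (g p) (g q)) = 0" by simp
    moreover have "(\<Sum>p\<in>UNIV. c (g p) * ip (g p) (g q)) = c (g q) * ip (g q) (g q)"
      by (rule sum.remove[where x=q, THEN trans]) (auto intro!: sum.neutral simp: o)
    ultimately have "c (g q) * ip (g q) (g q) = 0" by simp
    thus "c v = 0" using q nz ip_self_zero by auto
  qed
  have "card (range g) \<le> DIM(vec7)" using independent_bound[OF ind] by simp
  moreover have "card (range g) = CARD('a)" using card_image[OF inj] by simp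
  ultimately show ?thesis by (simp add: card_idx)
qed

end


lemma bil_sum_l:
  assumes "bilinear \<beta>"
  shows "\<beta> (\<Sum>k\<in>S. a k *\<^sub>R x k) y = (\<Sum>k\<in>S. a k * \<beta> (x k) y)"
proof -
  have l: "linear (\<lambda>x. \<beta> x y)" using assms by (simp add: bilinear_def)
  show ?thesis using linear_sum[OF l, of "\<lambda>k. a k *\<^sub>R x k" S] bilinear_lmul[OF assms]
    by simp
qed

lemma bil_sum_r:
  assumes "bilinear \<beta>"
  shows "\<beta> y (\<Sum>k\<in>S. a k *\<^sub>R x k) = (\<Sum>k\<in>S. a k * \<beta> y (x k))"
proof -
  have l: "linear (\<lambda>x. \<beta> y x)" using assms by (simp add: bilinear_def)
  show ?thesis using linear_sum[OF l, of "\<lambda>k. a k *\<^sub>R x k" S] bilinear_rmul[OF assms]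
    by simp
qed

context IP begin

lemma parseval:
  assumes ob: "orthonormal_basis ip b"
  shows "x = (\<Sum>i\<in>UNIV. ip x (b i) *\<^sub>R b i)"
proof (rule ccontr)
  define y where "y = x - (\<Sum>i\<in>UNIV. ip x (b i) *\<^sub>R b i)"
  assume "x \<noteq> (\<Sum>i\<in>UNIV. ip x (b i) *\<^sub>R b i)"
  hence ny: "y \<noteq> 0" by (simp add: y_def)
  have obb: "ip (b i) (b j) = (if i = j then 1 else 0)" for i j
    using ob by (simp add: orthonormal_basis_def)
  have yb: "ip y (b j) = 0" for j
  proof -
    have "(\<Sum>i\<in>UNIV. ip x (b i) * ip (b i) (b j)) = (\<Sum>i\<in>UNIV. if i = j then ip x (b i) else 0)"
      by (rule sum.cong) (auto simp: obb)
    also have "\<dots> = ip x (b j)" by simp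
    finally have "(\<Sum>i\<in>UNIV. ip x (b i) * ip (b i) (b j)) = ip x (b j)" .
    thus ?thesis by (simp add: y_def)
  qed
  define g where "g = case_option y b"
  have "CARD(idx option) \<le> 7"
  proof (rule orth_card[of g])
    fix p q :: "idx option" assume "p \<noteq> q"
    thus "ip (g p) (g q) = 0"
      by (cases p; cases q) (auto simp: g_def yb obb ip_sym[of "b _" y])
  next
    fix p :: "idx option"
    show "g p \<noteq> 0"
    proof (cases p)
      case None thus ?thesis using ny by (simp add: g_def)
    next
      case (Some i)
      have "b i \<noteq> 0" using obb[of i i] by auto
      thus ?thesis using Some by (simp add: g_def)
    qed
  qed
  thus False by (simp add: card_idx)
qed

lemma parseval_ip:
  assumes ob: "orthonormal_basis ip b"
  shows "ip x y = (\<Sum>i\<in>UNIV. ip x (b i) * ip y (b i))"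
proof -
  have "ip x y = ip (\<Sum>i\<in>UNIV. ip x (b i) *\<^sub>R b i) y" using parseval[OF ob, of x] by simp
  also have "\<dots> = (\<Sum>i\<in>UNIV. ip x (b i) * ip y (b i))" by (simp add: ip_sym[of "b _" y])
  finally show ?thesis .
qed

lemma trace_inv:
  fixes \<beta> :: "vec7 \<Rightarrow> vec7 \<Rightarrow> real"
  assumes ob: "orthonormal_basis ip b" and oB: "orthonormal_basis ip B" and bl: "bilinear \<beta>"
  shows "(\<Sum>i\<in>UNIV. \<beta> (b i) (b i)) = (\<Sum>i\<in>UNIV. \<beta> (B i) (B i))"
proof -
  have oBB: "ip (B k) (B l) = (if k = l then 1 else 0)" for k l
    using oB by (simp add: orthonormal_basis_def)
  have exp: "\<beta> (b i) (b i) = (\<Sum>k\<in>UNIV. \<Sum>l\<in>UNIV. (ip (b i) (B k) * ip (b i) (B l)) * \<beta> (B k) (B l))" for i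
  proof -
    have "\<beta> (b i) (b i) = \<beta> (\<Sum>k\<in>UNIV. ip (b i) (B k) *\<^sub>R B k) (\<Sum>l\<in>UNIV. ip (b i) (B l) *\<^sub>R B l)"
      using parseval[OF oB, of "b i"] by simp
    also have "\<dots> = (\<Sum>k\<in>UNIV. ip (b i) (B k) * (\<Sum>l\<in>UNIV. ip (b i) (B l) * \<beta> (B k) (B l)))"
      by (subst bil_sum_l[OF bl]) (simp add: bil_sum_r[OF bl])
    also have "\<dots> = (\<Sum>k\<in>UNIV. \<Sum>l\<in>UNIV. (ip (b i) (B k) * ip (b i) (B l)) * \<beta> (B k) (B l))"
      by (simp add: sum_distrib_left mult.assoc)
    finally show ?thesis .
  qed
  have "(\<Sum>i\<in>UNIV. \<beta> (b i) (b i)) =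
     (\<Sum>i\<in>UNIV. \<Sum>k\<in>UNIV. \<Sum>l\<in>UNIV. (ip (b i) (B k) * ip (b i) (B l)) * \<beta> (B k) (B l))"
    using exp by simp
  also have "\<dots> = (\<Sum>k\<in>UNIV. \<Sum>i\<in>UNIV. \<Sum>l\<in>UNIV. (ip (b i) (B k) * ip (b i) (B l)) * \<beta> (B k) (B l))"
    by (rule sum.swap)
  also have "\<dots> = (\<Sum>k\<in>UNIV. \<Sum>l\<in>UNIV. \<Sum>i\<in>UNIV. (ip (b i) (B k) * ip (b i) (B l)) * \<beta> (B k) (B l))"
    by (rule sum.cong[OF refl], rule sum.swap)
  also have "\<dots> = (\<Sum>k\<in>UNIV. \<Sum>l\<in>UNIV. ip (B k) (B l) * \<beta> (B k) (B l))"
  proof -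
    have "(\<Sum>i\<in>UNIV. ip (b i) (B k) * ip (b i) (B l)) = ip (B k) (B l)" for k l
      using parseval_ip[OF ob, of "B k" "B l"] by (simp add: ip_sym[of "b _"])
    thus ?thesis by (simp add: sum_distrib_right[symmetric])
  qed
  also have "\<dots> = (\<Sum>i\<in>UNIV. \<beta> (B i) (B i))"
  proof (rule sum.cong[OF refl])
    fix k show "(\<Sum>l\<in>UNIV. ip (B k) (B l) * \<beta> (B k) (B l)) = \<beta> (B k) (B k)"
    proof -
      have "(\<Sum>l\<in>UNIV. ip (B k) (B l) * \<beta> (B k) (B l)) = (\<Sum>l\<in>UNIV. if l = k then \<beta> (B k) (B l) else 0)"
        by (rule sum.cong) (auto simp: oBB)
      thus ?thesis by simp
    qed
  qed
  finally show ?thesis .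
qed

end


lemma lin_cmul: "linear (g :: 'a::real_vector \<Rightarrow> real) \<Longrightarrow> linear (\<lambda>q. c * g q)"
  by (simp add: linear_iff algebra_simps)

lemma lin_brl: "linear (\<lambda>p. n_bracket X p)" and lin_brr: "linear (\<lambda>p. n_bracket p Y)"
  using br_bilinear by (auto simp: bilinear_def)

context IP begin

lemma lin_ipl: "linear F \<Longrightarrow> linear (\<lambda>p. ip (F p) Z)"
proof -
  assume F: "linear F"
  have "linear (\<lambda>x. ip x Z)" using ip_bil by (simp add: bilinear_def)
  from linear_compose[OF F this] show ?thesis by (simp add: o_def)
qed

lemma lin_ipr: "linear F \<Longrightarrow> linear (\<lambda>p. ip Z (F p))"
proof -
  assume F: "linear F"
  have "linear (\<lambda>x. ip Z x)" using ip_bil by (simp add: bilinear_def)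
  from linear_compose[OF F this] show ?thesis by (simp add: o_def)
qed

lemma bil1: "linear F \<Longrightarrow> linear G \<Longrightarrow> bilinear (\<lambda>p q. ip (F p) (G q))"
  unfolding bilinear_def by (auto intro: lin_ipl lin_ipr)

lemma bil2: "linear F \<Longrightarrow> linear G \<Longrightarrow> bilinear (\<lambda>p q. ip (F p) Z1 * ip (G q) Z2)"
proof -
  assume F: "linear F" and G: "linear G"
  have a: "linear (\<lambda>q. ip (F p) Z1 * ip (G q) Z2)" for p
    using lin_cmul[OF lin_ipl[OF G]] by blast
  have b: "linear (\<lambda>p. ip (F p) Z1 * ip (G q) Z2)" for q
    using lin_cmul[OF lin_ipl[OF F], of "ip (G q) Z2"] by (simp add: mult.commute)
  show ?thesis unfolding bilinear_def using a b by blast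
qed

lemma ricci_inv:
  assumes ob: "orthonormal_basis ip b" and oB: "orthonormal_basis ip B"
  shows "ricci_form n_bracket ip b X Y = ricci_form n_bracket ip B X Y"
proof -
  have S1: "(\<Sum>i\<in>UNIV. \<Sum>j\<in>UNIV. ip (n_bracket X (c i)) (c j) * ip (n_bracket Y (c i)) (c j))
      = (\<Sum>i\<in>UNIV. ip (n_bracket X (c i)) (n_bracket Y (c i)))" if oc: "orthonormal_basis ip c" for c
    by (rule sum.cong[OF refl], rule parseval_ip[OF oc, symmetric])
  have T1: "(\<Sum>i\<in>UNIV. ip (n_bracket X (b i)) (n_bracket Y (b i))) = (\<Sum>i\<in>UNIV. ip (n_bracket X (B i)) (n_bracket Y (B i)))"
    using trace_inv[OF ob oB bil1[OF lin_brl lin_brl]] by simp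
  have T2a: "(\<Sum>j\<in>UNIV. ip (n_bracket (b i) (b j)) X * ip (n_bracket (b i) (b j)) Y)
     = (\<Sum>j\<in>UNIV. ip (n_bracket (b i) (B j)) X * ip (n_bracket (b i) (B j)) Y)" for i
    using trace_inv[OF ob oB bil2[OF lin_brl lin_brl]] by simp
  have T2b: "(\<Sum>i\<in>UNIV. ip (n_bracket (b i) (B j)) X * ip (n_bracket (b i) (B j)) Y)
     = (\<Sum>i\<in>UNIV. ip (n_bracket (B i) (B j)) X * ip (n_bracket (B i) (B j)) Y)" for j
    using trace_inv[OF ob oB bil2[OF lin_brr lin_brr]] by simp
  have T2: "(\<Sum>i\<in>UNIV. \<Sum>j\<in>UNIV. ip (n_bracket (b i) (b j)) X * ip (n_bracket (b i) (b j)) Y)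
     = (\<Sum>i\<in>UNIV. \<Sum>j\<in>UNIV. ip (n_bracket (B i) (B j)) X * ip (n_bracket (B i) (B j)) Y)"
  proof -
    have "(\<Sum>i\<in>UNIV. \<Sum>j\<in>UNIV. ip (n_bracket (b i) (b j)) X * ip (n_bracket (b i) (b j)) Y)
      = (\<Sum>i\<in>UNIV. \<Sum>j\<in>UNIV. ip (n_bracket (b i) (B j)) X * ip (n_bracket (b i) (B j)) Y)"
      using T2a by simp
    also have "\<dots> = (\<Sum>j\<in>UNIV. \<Sum>i\<in>UNIV. ip (n_bracket (b i) (B j)) X * ip (n_bracket (b i) (B j)) Y)"
      by (rule sum.swap)
    also have "\<dots> = (\<Sum>j\<in>UNIV. \<Sum>i\<in>UNIV. ip (n_bracket (B i) (B j)) X * ip (n_bracket (B i) (B j)) Y)"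
      using T2b by simp
    also have "\<dots> = (\<Sum>i\<in>UNIV. \<Sum>j\<in>UNIV. ip (n_bracket (B i) (B j)) X * ip (n_bracket (B i) (B j)) Y)"
      by (rule sum.swap)
    finally show ?thesis .
  qed
  show ?thesis unfolding ricci_form_def by (simp only: S1[OF ob] S1[OF oB] T1 T2)
qed

lemma lin_ip2: "linear (\<lambda>Y. ip Z Y)"
  using ip_bil by (simp add: bilinear_def)

lemma ricci_lin2: "linear (\<lambda>Y. ricci_form n_bracket ip b X Y)"
proof -
  have l1: "linear (\<lambda>Y. \<Sum>i\<in>UNIV. \<Sum>j\<in>UNIV. ip (n_bracket X (b i)) (b j) * ip (n_bracket Y (b i)) (b j))"
    by (intro linear_compose_sum ballI lin_cmul lin_ipl lin_brr)
  have l2: "linear (\<lambda>Y. \<Sum>i\<in>UNIV. \<Sum>j\<in>UNIV. ip (n_bracket (b i) (b j)) X * ip (n_bracket (b i) (b j)) Y)"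
    by (intro linear_compose_sum ballI lin_cmul lin_ip2)
  have "linear (\<lambda>Y. - (1/2) * (\<Sum>i\<in>UNIV. \<Sum>j\<in>UNIV. ip (n_bracket X (b i)) (b j) * ip (n_bracket Y (b i)) (b j))
     + (1/4) * (\<Sum>i\<in>UNIV. \<Sum>j\<in>UNIV. ip (n_bracket (b i) (b j)) X * ip (n_bracket (b i) (b j)) Y))"
    by (intro linear_compose_add lin_cmul l1 l2)
  thus ?thesis unfolding ricci_form_def by simp
qed

lemma ricci_sym: "ricci_form n_bracket ip b X Y = ricci_form n_bracket ip b Y X"
  unfolding ricci_form_def by (simp add: mult.commute)

lemma ricci_op_ip:
  assumes ob: "orthonormal_basis ip b"
  shows "ip (ricci_op n_bracket ip b X) Y = ricci_form n_bracket ip b X Y"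
proof -
  have l: "linear (\<lambda>Y. ricci_form n_bracket ip b X Y)" by (rule ricci_lin2)
  have "ricci_form n_bracket ip b X Y = ricci_form n_bracket ip b X (\<Sum>k\<in>UNIV. ip Y (b k) *\<^sub>R b k)"
    using parseval[OF ob, of Y] by simp
  also have "\<dots> = (\<Sum>k\<in>UNIV. ip Y (b k) * ricci_form n_bracket ip b X (b k))"
    using linear_sum[OF l, of "\<lambda>k. ip Y (b k) *\<^sub>R b k" UNIV] linear_scale[OF l] by simp
  also have "\<dots> = (\<Sum>k\<in>UNIV. ricci_form n_bracket ip b X (b k) * ip (b k) Y)"
    by (rule sum.cong[OF refl]) (simp add: ip_sym[of Y])
  also have "\<dots> = ip (ricci_op n_bracket ip b X) Y"
    unfolding ricci_op_def by simp
  finally show ?thesis by simp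
qed

end


context IP begin

definition gsprop :: "(nat \<Rightarrow> vec7 set) \<Rightarrow> (nat \<Rightarrow> vec7) \<Rightarrow> (nat \<Rightarrow> vec7) \<Rightarrow> nat \<Rightarrow> bool" where
  "gsprop V g B k \<longleftrightarrow> ip (B k) (B k) = 1 \<and> B k \<in> V k \<and> (\<forall>x\<in>V (Suc k). ip (B k) x = 0)
     \<and> (\<exists>t. t \<noteq> 0 \<and> B k - t *\<^sub>R g k \<in> V (Suc k))"

lemma gs_orth:
  assumes mono: "\<And>i j. i \<le> j \<Longrightarrow> V j \<subseteq> V i"
    and P: "\<forall>k\<in>S. gsprop V g B k" and i: "i \<in> S" and j: "j \<in> S"
  shows "ip (B i) (B j) = (if i = j then 1 else 0)"
proof -
  have lt: "ip (B p) (B q) = 0" if "p \<in> S" "q \<in> S" "p < q" for p q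
  proof -
    have "B q \<in> V q" using P that by (simp add: gsprop_def)
    hence "B q \<in> V (Suc p)" using mono[of "Suc p" q] that by auto
    thus ?thesis using P that by (simp add: gsprop_def)
  qed
  show ?thesis
  proof (cases "i = j")
    case True thus ?thesis using P i by (simp add: gsprop_def)
  next
    case False
    hence "i < j \<or> j < i" by auto
    thus ?thesis using lt[OF i j] lt[OF j i] False by (auto simp: ip_sym[of "B j"])
  qed
qed

lemma coef_lemma:
  assumes fin: "finite S" and on: "\<And>i j. i \<in> S \<Longrightarrow> j \<in> S \<Longrightarrow> ip (B i) (B j) = (if i = j then 1 else 0)"
    and x: "x = (\<Sum>l\<in>S. a l *\<^sub>R B l)"
  shows "x = (\<Sum>l\<in>S. ip x (B l) *\<^sub>R B l)"
proof -
  have "ip x (B j) = a j" if "j \<in> S" for j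
  proof -
    have "ip x (B j) = (\<Sum>l\<in>S. a l * ip (B l) (B j))" using x by simp
    also have "\<dots> = (\<Sum>l\<in>S. if l = j then a l else 0)"
      by (rule sum.cong) (auto simp: on that)
    also have "\<dots> = a j" using fin that by simp
    finally show ?thesis .
  qed
  hence "(\<Sum>l\<in>S. ip x (B l) *\<^sub>R B l) = (\<Sum>l\<in>S. a l *\<^sub>R B l)" by (intro sum.cong) auto
  thus ?thesis using x by simp
qed

lemma gs_aux:
  fixes V :: "nat \<Rightarrow> vec7 set" and g :: "nat \<Rightarrow> vec7"
  assumes sub: "\<And>k. subspace (V k)"
    and mono: "\<And>i j. i \<le> j \<Longrightarrow> V j \<subseteq> V i"
    and top: "V 8 = {0}"
    and gin: "\<And>k. 1 \<le> k \<Longrightarrow> k \<le> 7 \<Longrightarrow> g k \<in> V k"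
    and gnot: "\<And>k. 1 \<le> k \<Longrightarrow> k \<le> 7 \<Longrightarrow> g k \<notin> V (Suc k)"
    and dec: "\<And>k x. 1 \<le> k \<Longrightarrow> k \<le> 7 \<Longrightarrow> x \<in> V k \<Longrightarrow> \<exists>t. x - t *\<^sub>R g k \<in> V (Suc k)"
  shows "n \<le> 7 \<Longrightarrow> \<exists>B. (\<forall>k\<in>{8-n..7}. gsprop V g B k) \<and>
            (\<forall>x\<in>V (8-n). x = (\<Sum>l\<in>{8-n..7}. ip x (B l) *\<^sub>R B l))"
proof (induction n)
  case 0
  show ?case using top by auto
next
  case (Suc n)
  then obtain B where P: "\<forall>k\<in>{8-n..7}. gsprop V g B k"
    and Pars: "\<forall>x\<in>V (8-n). x = (\<Sum>l\<in>{8-n..7}. ip x (B l) *\<^sub>R B l)" by auto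
  define k where "k = 7 - n"
  define m where "m = 8 - n"
  have k1: "1 \<le> k" "k \<le> 7" and mk: "m = Suc k" and kS: "8 - Suc n = k"
    using Suc.prems by (auto simp: k_def m_def)
  have BinVm: "B l \<in> V m" if "l \<in> {m..7}" for l
  proof -
    have "B l \<in> V l" using P that by (simp add: gsprop_def m_def)
    thus ?thesis using mono[of m l] that by auto
  qed
  define s where "s = (\<Sum>l\<in>{m..7}. ip (g k) (B l) *\<^sub>R B l)"
  have sV: "s \<in> V m" unfolding s_def
    by (intro subspace_sum[OF sub] ballI subspace_mul[OF sub] BinVm)
  define h where "h = g k - s"
  have hx: "ip h x = 0" if "x \<in> V m" for x
  proof -
    have xe: "x = (\<Sum>l\<in>{m..7}. ip x (B l) *\<^sub>R B l)" using Pars that by (simp add: m_def)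
    have "ip (g k) x = (\<Sum>l\<in>{m..7}. ip x (B l) * ip (g k) (B l))"
      by (subst xe) simp
    moreover have "ip s x = (\<Sum>l\<in>{m..7}. ip (g k) (B l) * ip (B l) x)" by (simp add: s_def)
    ultimately show ?thesis by (simp add: h_def ip_sym[of "B _" x] mult.commute)
  qed
  have hnz: "h \<noteq> 0"
  proof
    assume "h = 0"
    hence "g k \<in> V m" using sV by (simp add: h_def)
    thus False using gnot[OF k1] mk by simp
  qed
  define N where "N = sqrt (ip h h)"
  have hpos: "ip h h > 0" using ip_pos[OF hnz] .
  have Npos: "N > 0" using hpos by (simp add: N_def)
  have NN: "N * N = ip h h" using hpos by (simp add: N_def)
  define B' where "B' = B(k := (1/N) *\<^sub>R h)"
  have hVk: "h \<in> V k"
  proof -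
    have "s \<in> V k" using sV mono[of k m] mk by auto
    thus ?thesis using gin[OF k1] subspace_diff[OF sub] by (simp add: h_def)
  qed
  have Pk: "gsprop V g B' k"
    unfolding gsprop_def
  proof (intro conjI)
    show "ip (B' k) (B' k) = 1" using Npos NN hpos by (simp add: B'_def)
    show "B' k \<in> V k" using hVk subspace_mul[OF sub] by (simp add: B'_def)
    show "\<forall>x\<in>V (Suc k). ip (B' k) x = 0" using hx mk by (simp add: B'_def)
    show "\<exists>t. t \<noteq> 0 \<and> B' k - t *\<^sub>R g k \<in> V (Suc k)"
    proof (intro exI conjI)
      show "1/N \<noteq> 0" using Npos by simp
      have "B' k - (1/N) *\<^sub>R g k = (- (1/N)) *\<^sub>R s"
        by (simp add: B'_def h_def algebra_simps)
      moreover have "(- (1/N)) *\<^sub>R s \<in> V (Suc k)"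
        by (rule subspace_mul[OF sub]) (use sV mk in simp)
      ultimately show "B' k - (1/N) *\<^sub>R g k \<in> V (Suc k)" by simp
    qed
  qed
  have Pall: "\<forall>l\<in>{k..7}. gsprop V g B' l"
  proof
    fix l assume l: "l \<in> {k..7}"
    show "gsprop V g B' l"
    proof (cases "l = k")
      case True thus ?thesis using Pk by simp
    next
      case False
      hence "l \<in> {8-n..7}" using l k_def Suc.prems by auto
      hence "gsprop V g B l" using P by auto
      moreover have "B' l = B l" using False by (simp add: B'_def)
      ultimately show ?thesis by (simp add: gsprop_def)
    qed
  qed
  have onk: "ip (B' i) (B' j) = (if i = j then 1 else 0)" if "i \<in> {k..7}" "j \<in> {k..7}" for i j
    using gs_orth[OF mono Pall that] .
  have Bsame: "B' l = B l" if "l \<in> {m..7}" for l using that mk by (auto simp: B'_def)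
  have Pars': "x = (\<Sum>l\<in>{k..7}. ip x (B' l) *\<^sub>R B' l)" if x: "x \<in> V k" for x
  proof -
    obtain t where t: "x - t *\<^sub>R g k \<in> V (Suc k)" using dec[OF k1 x] by auto
    define v where "v = x - t *\<^sub>R g k"
    have vV: "v \<in> V m" using t mk by (simp add: v_def)
    have ve: "v = (\<Sum>l\<in>{m..7}. ip v (B l) *\<^sub>R B l)" using Pars vV by (simp add: m_def)
    have ge: "g k = N *\<^sub>R B' k + s" using Npos by (simp add: B'_def h_def)
    define a where "a = (\<lambda>l. if l = k then t * N else t * ip (g k) (B l) + ip v (B l))"
    have "x = t *\<^sub>R g k + v" by (simp add: v_def)
    also have "\<dots> = (t * N) *\<^sub>R B' k + (\<Sum>l\<in>{m..7}. (t * ip (g k) (B l) + ip v (B l)) *\<^sub>R B l)"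
      apply (subst ge) apply (subst ve)
      by (simp add: s_def scaleR_add_right scaleR_add_left sum.distrib scaleR_sum_right)
    also have "\<dots> = (\<Sum>l\<in>insert k {m..7}. a l *\<^sub>R B' l)"
    proof -
      have "k \<notin> {m..7}" using mk by auto
      moreover have "(\<Sum>l\<in>{m..7}. a l *\<^sub>R B' l) = (\<Sum>l\<in>{m..7}. (t * ip (g k) (B l) + ip v (B l)) *\<^sub>R B l)"
        by (rule sum.cong[OF refl]) (use mk in \<open>auto simp: a_def B'_def\<close>)
      ultimately show ?thesis by (simp add: a_def)
    qed
    also have "insert k {m..7} = {k..7}" using mk k1 by auto
    finally have "x = (\<Sum>l\<in>{k..7}. a l *\<^sub>R B' l)" .
    from coef_lemma[OF _ onk this] show ?thesis by simp
  qed
  have k7: "7 - n = k" by (simp add: k_def)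
  show ?case unfolding kS
    using Pall Pars' by blast
qed

end


definition Wf :: "nat \<Rightarrow> vec7 set" where
  "Wf k = {x. (2 \<le> k \<longrightarrow> x$E1 = 0) \<and> (3 \<le> k \<longrightarrow> x$E2 + x$E3 = 0) \<and> (4 \<le> k \<longrightarrow> x$E2 = 0 \<and> x$E3 = 0)
     \<and> (5 \<le> k \<longrightarrow> x$E4 + x$E5 = 0) \<and> (6 \<le> k \<longrightarrow> x$E4 = 0 \<and> x$E5 = 0) \<and> (7 \<le> k \<longrightarrow> x$E6 = 0)
     \<and> (8 \<le> k \<longrightarrow> x$E7 = 0)}"

lemma Wf_sub: "subspace (Wf k)"
  unfolding subspace_def
proof (intro conjI ballI allI)
  show "0 \<in> Wf k" by (simp add: Wf_def)
next
  fix x y assume "x \<in> Wf k" "y \<in> Wf k"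
  thus "x + y \<in> Wf k" unfolding Wf_def
    by (simp add: algebra_simps)
next
  fix c x assume "x \<in> Wf k"
  thus "c *\<^sub>R x \<in> Wf k" unfolding Wf_def by (simp add: distrib_left[symmetric])
qed

lemma Wf_mono: "i \<le> j \<Longrightarrow> Wf j \<subseteq> Wf i"
  unfolding Wf_def using le_trans[of _ i j] by blast
definition fl :: "nat \<Rightarrow> vec7" where
  "fl k = (if k = 1 then e E1 else if k = 2 then e E2 else if k = 3 then e E3 - e E2
     else if k = 4 then e E4 else if k = 5 then e E5 - e E4 else if k = 6 then e E6 else e E7)"

definition wt :: "nat \<Rightarrow> real" where
  "wt k = (if k = 1 then 1 else if k \<le> 3 then 2 else if k \<le> 5 then 3 else if k = 6 then 4 else 5)"

lemma k17: "1 \<le> k \<Longrightarrow> k \<le> (7::nat) \<Longrightarrow> k = 1 \<or> k = 2 \<or> k = 3 \<or> k = 4 \<or> k = 5 \<or> k = 6 \<or> k = 7"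
  by arith

lemma Wf_top: "Wf 8 = {0}"
  by (auto simp: Wf_def vec_eq_iff all_idx)

lemma fl_in: "1 \<le> k \<Longrightarrow> k \<le> 7 \<Longrightarrow> fl k \<in> Wf k"
  by (drule (1) k17) (elim disjE; simp add: Wf_def fl_def)

lemma fl_notin: "1 \<le> k \<Longrightarrow> k \<le> 7 \<Longrightarrow> fl k \<notin> Wf (Suc k)"
  by (drule (1) k17) (elim disjE; simp add: Wf_def fl_def)

lemma fl_dec: "1 \<le> k \<Longrightarrow> k \<le> 7 \<Longrightarrow> x \<in> Wf k \<Longrightarrow> \<exists>t. x - t *\<^sub>R fl k \<in> Wf (Suc k)"
  apply (drule (1) k17)
  apply (elim disjE)
  subgoal by (rule exI[of _ "x$E1"]) (simp add: Wf_def fl_def algebra_simps)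
  subgoal by (rule exI[of _ "x$E2 + x$E3"]) (simp add: Wf_def fl_def algebra_simps)
  subgoal by (rule exI[of _ "x$E3"]) (simp add: Wf_def fl_def algebra_simps)
  subgoal by (rule exI[of _ "x$E4 + x$E5"]) (simp add: Wf_def fl_def algebra_simps)
  subgoal by (rule exI[of _ "x$E5"]) (simp add: Wf_def fl_def algebra_simps)
  subgoal by (rule exI[of _ "x$E6"]) (simp add: Wf_def fl_def algebra_simps)
  subgoal by (rule exI[of _ "x$E7"]) (simp add: Wf_def fl_def algebra_simps)
  done




lemma basis_exp: "x = (\<Sum>i\<in>UNIV. x$i *\<^sub>R e i)"
  by (simp add: vec_eq_iff all_idx sum_idx)

lemma lin_exp:
  assumes "linear D"
  shows "D x $ j = (\<Sum>i\<in>UNIV. x$i * D (e i) $ j)"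
proof -
  have "D x = D (\<Sum>i\<in>UNIV. x$i *\<^sub>R e i)" using basis_exp[of x] by simp
  also have "\<dots> = (\<Sum>i\<in>UNIV. x$i *\<^sub>R D (e i))"
    by (subst linear_sum[OF assms]) (simp add: linear_scale[OF assms])
  finally show ?thesis by simp
qed

lemma br_e:
  "n_bracket (e E1) (e E2) = e E4" "n_bracket (e E1) (e E3) = e E5" "n_bracket (e E1) (e E4) = e E6"
  "n_bracket (e E1) (e E5) = 0" "n_bracket (e E1) (e E6) = e E7" "n_bracket (e E1) (e E7) = 0"
  "n_bracket (e E2) (e E3) = e E6" "n_bracket (e E2) (e E4) = 0" "n_bracket (e E2) (e E5) = e E7"
  "n_bracket (e E2) (e E6) = 0" "n_bracket (e E2) (e E7) = 0"
  "n_bracket (e E3) (e E4) = 0" "n_bracket (e E3) (e E5) = e E7" "n_bracket (e E3) (e E6) = 0"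
  "n_bracket (e E3) (e E7) = 0"
  by (simp_all add: vec_eq_iff all_idx)

lemma der_facts:
  assumes der: "is_derivation n_bracket D"
  shows "D (e E1) $ E1 = D (e E7) $ E7 / 5" "D (e E2) $ E2 = 2 * D (e E7) $ E7 / 5" "D (e E3) $ E3 = 2 * D (e E7) $ E7 / 5"
    "D (e E4) $ E4 = 3 * D (e E7) $ E7 / 5" "D (e E5) $ E5 = 3 * D (e E7) $ E7 / 5" "D (e E6) $ E6 = 4 * D (e E7) $ E7 / 5"
    "D (e E2) $ E1 = 0" "D (e E2) $ E3 = 0" "D (e E3) $ E1 = 0" "D (e E3) $ E2 = 0"
    "D (e E4) $ E1 = 0" "D (e E4) $ E2 = 0" "D (e E4) $ E3 = 0" "D (e E4) $ E5 = 0"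
    "D (e E5) $ E1 = 0" "D (e E5) $ E2 = 0" "D (e E5) $ E3 = 0" "D (e E5) $ E4 = 0"
    "D (e E6) $ E1 = 0" "D (e E6) $ E2 = 0" "D (e E6) $ E3 = 0" "D (e E6) $ E4 = 0" "D (e E6) $ E5 = 0"
    "D (e E7) $ E1 = 0" "D (e E7) $ E2 = 0" "D (e E7) $ E3 = 0" "D (e E7) $ E4 = 0" "D (e E7) $ E5 = 0" "D (e E7) $ E6 = 0"
proof -
  have lin: "linear D" and L: "\<And>x y. D (n_bracket x y) = n_bracket (D x) y + n_bracket x (D y)"
    using der by (auto simp: is_derivation_def)
  have D0: "D 0 = 0" using linear_0[OF lin] .
  have C: "D (n_bracket (e i) (e j)) $ k = n_bracket (D (e i)) (e j) $ k + n_bracket (e i) (D (e j)) $ k" for i j k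
    using L[of "e i" "e j"] by simp
  show "D (e E1) $ E1 = D (e E7) $ E7 / 5"
    using C[of E1 E2 E4] C[of E1 E3 E4] C[of E1 E3 E5] C[of E1 E4 E6] C[of E1 E5 E6] C[of E2 E3 E6] C[of E3 E5 E7]
    by (simp add: br_e D0) linarith?
  show "D (e E2) $ E2 = 2 * D (e E7) $ E7 / 5"
    using C[of E1 E2 E4] C[of E1 E3 E4] C[of E1 E3 E5] C[of E1 E4 E6] C[of E1 E5 E6] C[of E1 E6 E7] C[of E2 E3 E6] C[of E3 E5 E7]
    by (simp add: br_e D0) linarith?
  show "D (e E3) $ E3 = 2 * D (e E7) $ E7 / 5"
    using C[of E1 E2 E4] C[of E1 E3 E4] C[of E1 E3 E5] C[of E1 E4 E6] C[of E1 E5 E6] C[of E2 E3 E6] C[of E3 E5 E7]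
    by (simp add: br_e D0) linarith?
  show "D (e E4) $ E4 = 3 * D (e E7) $ E7 / 5"
    using C[of E1 E2 E4] C[of E1 E3 E4] C[of E1 E3 E5] C[of E1 E4 E6] C[of E1 E5 E6] C[of E1 E6 E7] C[of E2 E3 E6] C[of E3 E5 E7]
    by (simp add: br_e D0) linarith?
  show "D (e E5) $ E5 = 3 * D (e E7) $ E7 / 5"
    using C[of E1 E2 E4] C[of E1 E3 E4] C[of E1 E3 E5] C[of E1 E4 E6] C[of E1 E5 E6] C[of E2 E3 E6] C[of E3 E5 E7]
    by (simp add: br_e D0) linarith?
  show "D (e E6) $ E6 = 4 * D (e E7) $ E7 / 5"
    using C[of E1 E2 E4] C[of E1 E3 E4] C[of E1 E3 E5] C[of E1 E4 E6] C[of E1 E5 E6] C[of E1 E6 E7] C[of E2 E3 E6] C[of E3 E5 E7]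
    by (simp add: br_e D0) linarith?
  show "D (e E2) $ E1 = 0"
    using C[of E1 E2 E3] C[of E1 E4 E5] C[of E2 E3 E5]
    by (simp add: br_e D0) linarith?
  show "D (e E2) $ E3 = 0"
    using C[of E1 E2 E5] C[of E2 E4 E7]
    by (simp add: br_e D0) linarith?
  show "D (e E3) $ E1 = 0"
    using C[of E1 E6 E6] C[of E1 E7 E7] C[of E2 E3 E4]
    by (simp add: br_e D0) linarith?
  show "D (e E3) $ E2 = 0"
    using C[of E1 E3 E4] C[of E1 E5 E6]
    by (simp add: br_e D0) linarith?
  show "D (e E4) $ E1 = 0"
    using C[of E1 E2 E1]
    by (simp add: br_e D0) linarith?
  show "D (e E4) $ E2 = 0"
    using C[of E1 E4 E4] C[of E1 E6 E6] C[of E1 E7 E7]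
    by (simp add: br_e D0) linarith?
  show "D (e E4) $ E3 = 0"
    using C[of E1 E2 E3]
    by (simp add: br_e D0) linarith?
  show "D (e E4) $ E5 = 0"
    using C[of E2 E4 E7]
    by (simp add: br_e D0) linarith?
  show "D (e E5) $ E1 = 0"
    using C[of E1 E3 E1]
    by (simp add: br_e D0) linarith?
  show "D (e E5) $ E2 = 0"
    using C[of E1 E5 E4]
    by (simp add: br_e D0) linarith?
  show "D (e E5) $ E3 = 0"
    using C[of E1 E5 E5]
    by (simp add: br_e D0) linarith?
  show "D (e E5) $ E4 = 0"
    using C[of E1 E5 E6]
    by (simp add: br_e D0) linarith?
  show "D (e E6) $ E1 = 0"
    using C[of E2 E3 E1]
    by (simp add: br_e D0) linarith?
  show "D (e E6) $ E2 = 0"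
    using C[of E1 E6 E4] C[of E1 E7 E6]
    by (simp add: br_e D0) linarith?
  show "D (e E6) $ E3 = 0"
    using C[of E1 E4 E3]
    by (simp add: br_e D0) linarith?
  show "D (e E6) $ E4 = 0"
    using C[of E1 E6 E6] C[of E1 E7 E7]
    by (simp add: br_e D0) linarith?
  show "D (e E6) $ E5 = 0"
    using C[of E1 E2 E3] C[of E1 E4 E5]
    by (simp add: br_e D0) linarith?
  show "D (e E7) $ E1 = 0"
    using C[of E1 E6 E1]
    by (simp add: br_e D0) linarith?
  show "D (e E7) $ E2 = 0"
    using C[of E1 E7 E4]
    by (simp add: br_e D0) linarith?
  show "D (e E7) $ E3 = 0"
    using C[of E1 E7 E5]
    by (simp add: br_e D0) linarith?
  show "D (e E7) $ E4 = 0"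
    using C[of E1 E7 E6]
    by (simp add: br_e D0) linarith?
  show "D (e E7) $ E5 = 0"
    using C[of E1 E4 E3] C[of E1 E6 E5]
    by (simp add: br_e D0) linarith?
  show "D (e E7) $ E6 = 0"
    using C[of E1 E7 E7]
    by (simp add: br_e D0) linarith?
qed


lemma Wf_alt:
  "x \<in> Wf 1"
  "x \<in> Wf 2 \<longleftrightarrow> x$E1 = 0"
  "x \<in> Wf 3 \<longleftrightarrow> x$E1 = 0 \<and> x$E3 = - x$E2"
  "x \<in> Wf 4 \<longleftrightarrow> x$E1 = 0 \<and> x$E2 = 0 \<and> x$E3 = 0"
  "x \<in> Wf 5 \<longleftrightarrow> x$E1 = 0 \<and> x$E2 = 0 \<and> x$E3 = 0 \<and> x$E5 = - x$E4"
  "x \<in> Wf 6 \<longleftrightarrow> x$E1 = 0 \<and> x$E2 = 0 \<and> x$E3 = 0 \<and> x$E4 = 0 \<and> x$E5 = 0"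
  "x \<in> Wf 7 \<longleftrightarrow> x$E1 = 0 \<and> x$E2 = 0 \<and> x$E3 = 0 \<and> x$E4 = 0 \<and> x$E5 = 0 \<and> x$E6 = 0"
  "x \<in> Wf 8 \<longleftrightarrow> x$E1 = 0 \<and> x$E2 = 0 \<and> x$E3 = 0 \<and> x$E4 = 0 \<and> x$E5 = 0 \<and> x$E6 = 0 \<and> x$E7 = 0"
  by (auto simp: Wf_def)

lemma Wf_1: "Wf (Suc 0) = UNIV" by (simp add: Wf_def)

lemma Wf_2: "Wf (Suc (Suc 0)) = Wf 2" by (simp add: numeral_2_eq_2)

lemma k18: "1 \<le> k \<Longrightarrow> k \<le> (8::nat) \<Longrightarrow> k = 1 \<or> k = 2 \<or> k = 3 \<or> k = 4 \<or> k = 5 \<or> k = 6 \<or> k = 7 \<or> k = 8"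
  by arith

lemma der_flag:
  assumes der: "is_derivation n_bracket D"
  shows der_flagW: "1 \<le> k \<Longrightarrow> k \<le> 8 \<Longrightarrow> x \<in> Wf k \<Longrightarrow> D x \<in> Wf k"
    and der_flagF: "1 \<le> k \<Longrightarrow> k \<le> 7 \<Longrightarrow> D (fl k) - (D (e E7) $ E7 / 5 * wt k) *\<^sub>R fl k \<in> Wf (Suc k)"
proof -
  have lin: "linear D" using der by (simp add: is_derivation_def)
  note F = der_facts[OF der]
  note X = lin_exp[OF lin]
  show "D x \<in> Wf k" if "1 \<le> k" "k \<le> 8" "x \<in> Wf k"
    using k18[OF that(1,2)] that(3)
    by (elim disjE) (simp_all add: Wf_alt Wf_1 X[of x] sum_idx F)
  show "D (fl k) - (D (e E7) $ E7 / 5 * wt k) *\<^sub>R fl k \<in> Wf (Suc k)" if "1 \<le> k" "k \<le> 7"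
    using k17[OF that(1,2)]
    by (elim disjE) (simp_all add: Wf_alt Wf_2 F fl_def wt_def linear_diff[OF lin] algebra_simps)
qed



fun rk :: "idx \<Rightarrow> nat" where
  "rk E1 = 1" | "rk E2 = 2" | "rk E3 = 3" | "rk E4 = 4" | "rk E5 = 5" | "rk E6 = 6" | "rk E7 = 7"

lemma rk_range: "rk i \<in> {1..7}" by (cases i) auto
lemma rk_inj: "rk i = rk j \<longleftrightarrow> i = j" by (cases i; cases j) auto

lemma sum_ident:
  fixes C :: "idx \<Rightarrow> idx \<Rightarrow> idx \<Rightarrow> real" and m :: "idx \<Rightarrow> real"
  assumes anti: "\<And>i j k. C j i k = - C i j k"
  shows "(\<Sum>k\<in>UNIV. m k * (- (1/2) * (\<Sum>i\<in>UNIV. \<Sum>j\<in>UNIV. C k i j * C k i j)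
            + (1/4) * (\<Sum>i\<in>UNIV. \<Sum>j\<in>UNIV. C i j k * C i j k)))
     = (1/4) * (\<Sum>i\<in>UNIV. \<Sum>j\<in>UNIV. \<Sum>k\<in>UNIV. (C i j k)^2 * (m k - m i - m j))"
proof -
  define A where "A = (\<Sum>k\<in>UNIV. m k * (\<Sum>i\<in>UNIV. \<Sum>j\<in>UNIV. C i j k * C i j k))"
  define B where "B = (\<Sum>k\<in>UNIV. m k * (\<Sum>i\<in>UNIV. \<Sum>j\<in>UNIV. C k i j * C k i j))"
  have L: "(\<Sum>k\<in>UNIV. m k * (- (1/2) * (\<Sum>i\<in>UNIV. \<Sum>j\<in>UNIV. C k i j * C k i j)
            + (1/4) * (\<Sum>i\<in>UNIV. \<Sum>j\<in>UNIV. C i j k * C i j k))) = - (1/2) * B + (1/4) * A"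
    unfolding A_def B_def by (simp add: sum.distrib sum_distrib_left algebra_simps)
  have sA: "(\<Sum>i\<in>UNIV. \<Sum>j\<in>UNIV. \<Sum>k\<in>UNIV. (C i j k)^2 * m k) = A"
  proof -
    have "(\<Sum>i\<in>UNIV. \<Sum>j\<in>UNIV. \<Sum>k\<in>UNIV. (C i j k)^2 * m k) = (\<Sum>i\<in>UNIV. \<Sum>k\<in>UNIV. \<Sum>j\<in>UNIV. (C i j k)^2 * m k)"
      by (rule sum.cong[OF refl], rule sum.swap)
    also have "\<dots> = (\<Sum>k\<in>UNIV. \<Sum>i\<in>UNIV. \<Sum>j\<in>UNIV. (C i j k)^2 * m k)" by (rule sum.swap)
    also have "\<dots> = A" unfolding A_def by (simp add: sum_distrib_left power2_eq_square mult_ac)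
    finally show ?thesis .
  qed
  have sB1: "(\<Sum>i\<in>UNIV. \<Sum>j\<in>UNIV. \<Sum>k\<in>UNIV. (C i j k)^2 * m i) = B"
    unfolding B_def by (simp add: sum_distrib_left power2_eq_square mult_ac)
  have sq: "(C j i k)^2 = (C i j k)^2" for i j k using anti[of i j k] by simp
  have sB2: "(\<Sum>i\<in>UNIV. \<Sum>j\<in>UNIV. \<Sum>k\<in>UNIV. (C i j k)^2 * m j) = B"
  proof -
    have "(\<Sum>i\<in>UNIV. \<Sum>j\<in>UNIV. \<Sum>k\<in>UNIV. (C i j k)^2 * m j) = (\<Sum>j\<in>UNIV. \<Sum>i\<in>UNIV. \<Sum>k\<in>UNIV. (C i j k)^2 * m j)"
      by (rule sum.swap)
    also have "\<dots> = (\<Sum>j\<in>UNIV. \<Sum>i\<in>UNIV. \<Sum>k\<in>UNIV. (C j i k)^2 * m j)"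
      by (intro sum.cong refl) (simp add: sq)
    also have "\<dots> = B" using sB1 .
    finally show ?thesis .
  qed
  have "(\<Sum>i\<in>UNIV. \<Sum>j\<in>UNIV. \<Sum>k\<in>UNIV. (C i j k)^2 * (m k - m i - m j))
      = (\<Sum>i\<in>UNIV. \<Sum>j\<in>UNIV. \<Sum>k\<in>UNIV. (C i j k)^2 * m k)
        - (\<Sum>i\<in>UNIV. \<Sum>j\<in>UNIV. \<Sum>k\<in>UNIV. (C i j k)^2 * m i)
        - (\<Sum>i\<in>UNIV. \<Sum>j\<in>UNIV. \<Sum>k\<in>UNIV. (C i j k)^2 * m j)"
    by (simp add: right_diff_distrib sum_subtractf)
  hence "(\<Sum>i\<in>UNIV. \<Sum>j\<in>UNIV. \<Sum>k\<in>UNIV. (C i j k)^2 * (m k - m i - m j)) = A - B - B"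
    using sA sB1 sB2 by simp
  thus ?thesis using L by simp
qed

lemma pos_sum:
  fixes G :: "idx \<Rightarrow> idx \<Rightarrow> idx \<Rightarrow> real"
  assumes nn: "\<And>i j k. 0 \<le> G i j k" and p: "0 < G a b c"
  shows "0 < (\<Sum>i\<in>UNIV. \<Sum>j\<in>UNIV. \<Sum>k\<in>UNIV. G i j k)"
proof -
  have s1: "0 \<le> (\<Sum>k\<in>UNIV. G i j k)" for i j by (rule sum_nonneg) (simp add: nn)
  have s2: "0 \<le> (\<Sum>j\<in>UNIV. \<Sum>k\<in>UNIV. G i j k)" for i by (rule sum_nonneg) (simp add: s1)
  have "G a b c \<le> (\<Sum>k\<in>UNIV. G a b k)" by (rule member_le_sum) (auto simp: nn)
  also have "\<dots> \<le> (\<Sum>j\<in>UNIV. \<Sum>k\<in>UNIV. G a j k)" by (rule member_le_sum[of b]) (auto simp: s1)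
  also have "\<dots> \<le> (\<Sum>i\<in>UNIV. \<Sum>j\<in>UNIV. \<Sum>k\<in>UNIV. G i j k)" by (rule member_le_sum[of a]) (auto simp: s2)
  finally show ?thesis using p by simp
qed



context IP begin

lemma no_soliton: "\<not> is_nilsoliton n_bracket ip"
proof
  assume "is_nilsoliton n_bracket ip"
  then obtain b c D where ob: "orthonormal_basis ip b" and der: "is_derivation n_bracket D"
    and ric: "ricci_op n_bracket ip b = (\<lambda>X. c *\<^sub>R X + D X)"
    unfolding is_nilsoliton_def by blast
  have lin: "linear D" using der by (simp add: is_derivation_def)
  define s where "s = D (e E7) $ E7 / 5"
  have ipD: "ip (D x) y = ricci_form n_bracket ip b x y - c * ip x y" for x y
  proof -
    have "ip (ricci_op n_bracket ip b x) y = ricci_form n_bracket ip b x y" by (rule ricci_op_ip[OF ob])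
    thus ?thesis using ric by simp
  qed
  have Dsym: "ip (D x) y = ip x (D y)" for x y
  proof -
    have "ip x (D y) = ip (D y) x" by (rule ip_sym)
    also have "\<dots> = ricci_form n_bracket ip b y x - c * ip y x" by (rule ipD)
    also have "\<dots> = ricci_form n_bracket ip b x y - c * ip x y"
      by (simp add: ricci_sym[of b y x] ip_sym[of y x])
    also have "\<dots> = ip (D x) y" by (simp add: ipD)
    finally show ?thesis by simp
  qed
  obtain B where P: "\<forall>k\<in>{1..7}. gsprop Wf fl B k"
    using gs_aux[OF Wf_sub Wf_mono Wf_top fl_in fl_notin fl_dec, of 7] by auto
  have Pk: "gsprop Wf fl B k" if "k \<in> {1..7}" for k using P that by auto
  define Bi where "Bi i = B (rk i)" for i
  have oBi: "orthonormal_basis ip Bi"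
    unfolding orthonormal_basis_def Bi_def
    using gs_orth[OF Wf_mono P rk_range rk_range] rk_inj by auto
  have BW: "B k \<in> Wf k" if "k \<in> {1..7}" for k using Pk[OF that] by (simp add: gsprop_def)
  have BO: "ip (B k) x = 0" if "k \<in> {1..7}" "x \<in> Wf (Suc k)" for k x
    using Pk[OF that(1)] that(2) by (simp add: gsprop_def)
  have eig: "D (B k) = (s * wt k) *\<^sub>R B k" if k: "k \<in> {1..7}" for k
  proof -
    obtain t where t: "B k - t *\<^sub>R fl k \<in> Wf (Suc k)" using Pk[OF k] by (auto simp: gsprop_def)
    define v where "v = B k - t *\<^sub>R fl k"
    define \<sigma> where "\<sigma> = s * wt k"
    define y where "y = D (B k) - \<sigma> *\<^sub>R B k"
    have Bk: "B k = t *\<^sub>R fl k + v" by (simp add: v_def)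
    have ye: "y = t *\<^sub>R (D (fl k) - \<sigma> *\<^sub>R fl k) + (D v - \<sigma> *\<^sub>R v)"
      unfolding y_def Bk by (simp add: linear_add[OF lin] linear_scale[OF lin] algebra_simps)
    have k': "1 \<le> k" "k \<le> 7" using k by auto
    have a1: "D (fl k) - \<sigma> *\<^sub>R fl k \<in> Wf (Suc k)" using der_flagF[OF der k'] by (simp add: \<sigma>_def s_def)
    have vW: "v \<in> Wf (Suc k)" using t by (simp add: v_def)
    have a2: "D v \<in> Wf (Suc k)" using der_flagW[OF der _ _ vW] k' by simp
    have yW: "y \<in> Wf (Suc k)" unfolding ye
      by (intro subspace_add[OF Wf_sub] subspace_diff[OF Wf_sub] subspace_mul[OF Wf_sub] a1 a2 vW)
    have yB: "ip y (B l) = 0" if l: "l \<in> {1..7}" for l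
    proof (cases "l \<le> k")
      case True
      have "y \<in> Wf (Suc l)" using yW Wf_mono[of "Suc l" "Suc k"] True by auto
      hence "ip (B l) y = 0" using BO[OF l] by simp
      thus ?thesis by (simp add: ip_sym[of y])
    next
      case False
      have "D (B l) \<in> Wf l" using der_flagW[OF der _ _ BW[OF l]] l by auto
      hence "D (B l) \<in> Wf (Suc k)" using Wf_mono[of "Suc k" l] False by auto
      hence "ip (B k) (D (B l)) = 0" using BO[OF k] by simp
      moreover have "ip (B k) (B l) = 0" using gs_orth[OF Wf_mono P k l] False by auto
      ultimately show ?thesis unfolding y_def using Dsym[of "B k" "B l"] by simp
    qed
    have "y = (\<Sum>i\<in>UNIV. ip y (Bi i) *\<^sub>R Bi i)" by (rule parseval[OF oBi])
    also have "\<dots> = 0" using yB rk_range by (simp add: Bi_def)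
    finally show ?thesis by (simp add: y_def \<sigma>_def)
  qed
  define \<sigma> where "\<sigma> i = s * wt (rk i)" for i
  have eigi: "D (Bi i) = \<sigma> i *\<^sub>R Bi i" for i using eig[OF rk_range] by (simp add: Bi_def \<sigma>_def)
  have one: "ip (Bi i) (Bi i) = 1" for i using oBi by (simp add: orthonormal_basis_def)
  have diag: "ricci_form n_bracket ip Bi (Bi i) (Bi i) = c + \<sigma> i" for i
  proof -
    have "ip (D (Bi i)) (Bi i) = \<sigma> i" using eigi one by simp
    thus ?thesis using ipD[of "Bi i" "Bi i"] ricci_inv[OF ob oBi] one by simp
  qed
  define C where "C i j k = ip (n_bracket (Bi i) (Bi j)) (Bi k)" for i j k
  have anti: "C j i k = - C i j k" for i j k unfolding C_def by (simp add: br_antisym[of "Bi j" "Bi i"])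
  have Cii: "C i i k = 0" for i k unfolding C_def by (simp add: br_self)
  have grad: "(\<sigma> i + \<sigma> j - \<sigma> k) * C i j k = 0" for i j k
  proof -
    have "ip (D (n_bracket (Bi i) (Bi j))) (Bi k) = \<sigma> k * C i j k"
      using Dsym[of "n_bracket (Bi i) (Bi j)" "Bi k"] eigi[of k] by (simp add: C_def)
    moreover have "D (n_bracket (Bi i) (Bi j)) = (\<sigma> i + \<sigma> j) *\<^sub>R n_bracket (Bi i) (Bi j)"
      using der eigi[of i] eigi[of j]
      by (simp add: is_derivation_def bilinear_lmul[OF br_bilinear] bilinear_rmul[OF br_bilinear] scaleR_add_left)
    ultimately show ?thesis by (simp add: C_def algebra_simps)
  qed
  have ric_sum: "(\<Sum>k\<in>UNIV. m k * ricci_form n_bracket ip Bi (Bi k) (Bi k))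
      = 1/4 * (\<Sum>i\<in>UNIV. \<Sum>j\<in>UNIV. \<Sum>k\<in>UNIV. (C i j k)^2 * (m k - m i - m j))" for m
  proof -
    have "ricci_form n_bracket ip Bi (Bi k) (Bi k) = - (1/2) * (\<Sum>i\<in>UNIV. \<Sum>j\<in>UNIV. C k i j * C k i j)
        + (1/4) * (\<Sum>i\<in>UNIV. \<Sum>j\<in>UNIV. C i j k * C i j k)" for k
      unfolding ricci_form_def C_def by simp
    thus ?thesis using sum_ident[of C m, OF anti] by simp
  qed
  have lhs: "(\<Sum>k\<in>UNIV. m k * ricci_form n_bracket ip Bi (Bi k) (Bi k))
      = c * (\<Sum>k\<in>UNIV. m k) + s * (\<Sum>k\<in>UNIV. m k * wt (rk k))" for m
    by (simp add: diag \<sigma>_def sum_idx algebra_simps)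
  obtain t1 where t1: "t1 \<noteq> 0" "B 1 - t1 *\<^sub>R fl 1 \<in> Wf 2" using Pk[of 1] by (auto simp: gsprop_def Wf_2)
  obtain t2 where t2: "t2 \<noteq> 0" "B 2 - t2 *\<^sub>R fl 2 \<in> Wf 3" using Pk[of 2] by (auto simp: gsprop_def)
  obtain t4 where t4: "t4 \<noteq> 0" "B 4 - t4 *\<^sub>R fl 4 \<in> Wf 5" using Pk[of 4] by (auto simp: gsprop_def)
  have c1: "B 1 $ E1 = t1" "B (Suc 0) $ E1 = t1" using t1(2) by (simp_all add: Wf_alt fl_def)
  have c2: "B 2 $ E1 = 0" "B 2 $ E3 = t2 - B 2 $ E2" using t2(2) by (simp_all add: Wf_alt fl_def)
  have br12: "n_bracket (B 1) (B 2) - (t1 * t2) *\<^sub>R fl 4 \<in> Wf 5"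
    by (simp add: Wf_alt fl_def c1 c2 algebra_simps)
  have o4: "ip (B 4) x = 0" if "x \<in> Wf 5" for x using BO[of 4 x] that by simp
  have f4: "t4 * ip (fl 4) (B 4) = 1"
  proof -
    have h: "ip (B 4 - t4 *\<^sub>R fl 4) (B 4) = 0" by (subst ip_sym) (rule o4[OF t4(2)])
    have "1 = ip (B 4) (B 4)" using one[of E4] by (simp add: Bi_def)
    also have "\<dots> = ip (t4 *\<^sub>R fl 4 + (B 4 - t4 *\<^sub>R fl 4)) (B 4)" by simp
    also have "\<dots> = t4 * ip (fl 4) (B 4) + ip (B 4 - t4 *\<^sub>R fl 4) (B 4)" by (simp only: ip_simps(1,5))
    also have "\<dots> = t4 * ip (fl 4) (B 4)" using h by simp
    finally show ?thesis by simp
  qed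
  have C124: "C E1 E2 E4 \<noteq> 0"
  proof -
    have h: "ip (n_bracket (B 1) (B 2) - (t1 * t2) *\<^sub>R fl 4) (B 4) = 0" by (subst ip_sym) (rule o4[OF br12])
    have "C E1 E2 E4 = ip ((t1 * t2) *\<^sub>R fl 4 + (n_bracket (B 1) (B 2) - (t1 * t2) *\<^sub>R fl 4)) (B 4)"
      by (simp add: C_def Bi_def)
    also have "\<dots> = (t1 * t2) * ip (fl 4) (B 4) + ip (n_bracket (B 1) (B 2) - (t1 * t2) *\<^sub>R fl 4) (B 4)"
      by (simp only: ip_simps(1,5))
    also have "\<dots> = t1 * t2 * ip (fl 4) (B 4)" using h by simp
    finally show ?thesis using f4 t1(1) t2(1) by auto
  qed
  show False
  proof (cases "s = 0")
    case False
    have zero: "C i j k = 0" if "wt (rk k) \<noteq> wt (rk i) + wt (rk j)" for i j k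
    proof -
      have "s * (wt (rk i) + wt (rk j) - wt (rk k)) * C i j k = 0"
        using grad[of i j k] by (simp add: \<sigma>_def algebra_simps)
      thus ?thesis using that False by simp
    qed
    have B3: "B 3 \<in> Wf 3" and B4: "B 4 \<in> Wf 4" and B5: "B 5 \<in> Wf 5" using BW by auto
    have br34: "n_bracket (B 3) (B 4) = 0" using B3 B4 by (simp add: vec_eq_iff all_idx Wf_alt)
    have br35: "n_bracket (B 3) (B 5) = 0" using B3 B5 by (simp add: vec_eq_iff all_idx Wf_alt)
    have z34: "C E3 E4 k = 0" "C E3 E5 k = 0" "C E4 E3 k = 0" "C E5 E3 k = 0" for k
      using br34 br35 anti[of E3 E4 k] anti[of E3 E5 k] by (simp_all add: C_def Bi_def)
    define m :: "idx \<Rightarrow> real" where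
      "m = (\<lambda>i. case i of E1 \<Rightarrow> -1 | E2 \<Rightarrow> -2 | E3 \<Rightarrow> 2 | E4 \<Rightarrow> 1 | E5 \<Rightarrow> 1 | E6 \<Rightarrow> 0 | E7 \<Rightarrow> -1)"
    have disj: "C i j k = 0 \<or> 0 \<le> m k - m i - m j" for i j k
      by (cases i; cases j; cases k) (simp_all add: m_def wt_def zero z34 Cii)
    have nn: "0 \<le> (C i j k)^2 * (m k - m i - m j)" for i j k
      using disj[of i j k] by auto
    have "0 < (C E1 E2 E4)^2 * (m E4 - m E1 - m E2)" using C124 by (simp add: m_def)
    from pos_sum[of "\<lambda>i j k. (C i j k)^2 * (m k - m i - m j)", OF nn this]
    have "0 < (\<Sum>k\<in>UNIV. m k * ricci_form n_bracket ip Bi (Bi k) (Bi k))" using ric_sum[of m] by simp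
    moreover have "(\<Sum>k\<in>UNIV. m k * ricci_form n_bracket ip Bi (Bi k) (Bi k)) = 0"
      using lhs[of m] by (simp add: m_def sum_idx wt_def)
    ultimately show False by simp
  next
    case True
    have B7: "B 7 \<in> Wf 7" using BW by auto
    have br7: "n_bracket x (B 7) = 0" for x using B7 by (simp add: vec_eq_iff all_idx Wf_alt)
    have z7: "C i E7 k = 0" "C E7 i k = 0" for i k
      using br7 anti[of i E7 k] by (simp_all add: C_def Bi_def)
    have z1: "C i j E1 = 0" for i j
    proof -
      have "ip (B 1) (n_bracket (Bi i) (Bi j)) = 0" using BO[of 1 "n_bracket (Bi i) (Bi j)"] by (simp add: Wf_alt Wf_2)
      hence "ip (n_bracket (Bi i) (Bi j)) (B 1) = 0" by (subst ip_sym)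
      thus ?thesis by (simp add: C_def Bi_def)
    qed
    define m :: "idx \<Rightarrow> real" where
      "m = (\<lambda>i. case i of E1 \<Rightarrow> -1 | E7 \<Rightarrow> 1 | _ \<Rightarrow> 0)"
    have disj: "C i j k = 0 \<or> 0 \<le> m k - m i - m j" for i j k
      by (cases i; cases j; cases k) (simp_all add: m_def z7 z1)
    have nn: "0 \<le> (C i j k)^2 * (m k - m i - m j)" for i j k
      using disj[of i j k] by auto
    have "0 < (C E1 E2 E4)^2 * (m E4 - m E1 - m E2)" using C124 by (simp add: m_def)
    from pos_sum[of "\<lambda>i j k. (C i j k)^2 * (m k - m i - m j)", OF nn this]
    have "0 < (\<Sum>k\<in>UNIV. m k * ricci_form n_bracket ip Bi (Bi k) (Bi k))" using ric_sum[of m] by simp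
    moreover have "(\<Sum>k\<in>UNIV. m k * ricci_form n_bracket ip Bi (Bi k) (Bi k)) = 0"
      using lhs[of m] True by (simp add: m_def sum_idx)
    ultimately show False by simp
  qed
qed

end

theorem mainTheorem2:
  shows "\<not> einstein_nilradical n_bracket"
proof
  assume "einstein_nilradical n_bracket"
  then obtain ip where ip: "is_inner_product ip" and sol: "is_nilsoliton n_bracket ip"
    unfolding einstein_nilradical_def by blast
  interpret IP ip by (rule IP.intro[OF ip])
  show False using no_soliton sol by simp
qed


end
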